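(* Let $n\ge 4$, let $H$ be a Hamiltonian cycle of the complete graph $K_n$ on $V=\{1,\dots,n\}$, and let $k\in\{2,3,\dots,n\}$. Let $H'$ be any $k$-exchange of $H$. Then one application of the vertex-based random solution generation with the matrix $\Pi^H$ outputs $H'$ with probability $\Omega(1/n^{2k-1})$.
   Context: For a Hamiltonian cycle $H$, $\Pi^H=(\pi_{i,j})$ is the symmetric $n\times n$ matrix with $\pi_{i,i}=0$, $\pi_{i,j}=1-\frac1n$ if $\{i,j\}\in H$ and $\pi_{i,j}=\frac{1}{n(n-2)}$ otherwise. (In the algorithm studied, $\Pi^H$ is the sampling matrix in iteration $t+1$ when $H$ is the best solution sampled in iteration $t$.) Vertex-based generation from $\Pi$: pick a start vertex uniformly at random; while unvisited vertices remain, from the current vertex $v$ move to an unvisited vertex $v'$ chosen with probability $\pi_{v,v'}/\sum_{j\text{ unvisited}}\pi_{v,j}$; output the Hamiltonian cycle visiting vertices in this order. A $k$-exchange of $H$ is a Hamiltonian cycle obtained from $H$ by removing $k$ of its edges and adding $k$ edges not in $H$. *)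

theory Defs
  imports Complex_Main
begin

text \<open>Vertices of K_n are 1..n; undirected edges are 2-element sets.\<close>

definition vertices :: "nat \<Rightarrow> nat set" where
  "vertices n = {1..n}"

definition cycle_edges :: "nat list \<Rightarrow> nat set set" where
  "cycle_edges xs = {{xs ! i, xs ! ((i + 1) mod length xs)} | i. i < length xs}"

definition is_tour :: "nat \<Rightarrow> nat list \<Rightarrow> bool" where
  "is_tour n xs \<longleftrightarrow> distinct xs \<and> set xs = vertices n"

definition ham_cycle :: "nat \<Rightarrow> nat set set \<Rightarrow> bool" where
  "ham_cycle n H \<longleftrightarrow> (\<exists>xs. is_tour n xs \<and> H = cycle_edges xs)"

definition k_exchange :: "nat \<Rightarrow> nat \<Rightarrow> nat set set \<Rightarrow> nat set set \<Rightarrow> bool" where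
  "k_exchange n k H H' \<longleftrightarrow> ham_cycle n H' \<and>
     (\<exists>R A. R \<subseteq> H \<and> card R = k \<and> A \<inter> H = {} \<and> card A = k \<and> H' = (H - R) \<union> A)"

definition Pi_H :: "nat \<Rightarrow> nat set set \<Rightarrow> nat \<Rightarrow> nat \<Rightarrow> real" where
  "Pi_H n H i j = (if i = j then 0
                   else if {i, j} \<in> H then 1 - 1 / real n
                   else 1 / (real n * (real n - 2)))"

text \<open>Probability of the remaining moves along the list, where U is the set of
  unvisited vertices (the current vertex, head of the list, already counted as visited).\<close>
fun path_prob :: "(nat \<Rightarrow> nat \<Rightarrow> real) \<Rightarrow> nat set \<Rightarrow> nat list \<Rightarrow> real" where
  "path_prob P U [] = 1"
| "path_prob P U [v] = 1"
| "path_prob P U (v # w # xs) =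
     P v w / (\<Sum>j\<in>U. P v j) * path_prob P (U - {w}) (w # xs)"

text \<open>Probability that vertex-based generation from P produces the vertex order xs
  (start vertex uniform on 1..n).\<close>
definition seq_prob :: "nat \<Rightarrow> (nat \<Rightarrow> nat \<Rightarrow> real) \<Rightarrow> nat list \<Rightarrow> real" where
  "seq_prob n P xs = 1 / real n * path_prob P (vertices n - {hd xs}) xs"

definition gen_prob :: "nat \<Rightarrow> (nat \<Rightarrow> nat \<Rightarrow> real) \<Rightarrow> nat set set \<Rightarrow> real" where
  "gen_prob n P C = (\<Sum>xs\<in>{xs. is_tour n xs \<and> cycle_edges xs = C}. seq_prob n P xs)"

end

theory Submission
  imports Defs
begin


lemma path_prob_nonneg:
  assumes "\<And>i j. P i j \<ge> 0"
  shows "path_prob P U xs \<ge> 0"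
  using assms by (induction P U xs rule: path_prob.induct) (auto intro!: mult_nonneg_nonneg divide_nonneg_nonneg sum_nonneg)

lemma exp_bound:
  assumes "n \<ge> 2"
  shows "(1 - 1 / real n) ^ (n - 1) \<ge> exp (-1)"
proof -
  define m where "m = n - 1"
  have m: "m > 0" "n = m + 1" using assms unfolding m_def by auto
  have e: "(1 + 1 / real m) ^ m \<le> exp 1"
    using exp_ge_one_plus_x_over_n_power_n[where x=1 and n=m] m by simp
  have eq: "1 - 1 / real n = 1 / (1 + 1 / real m)" using m by (simp add: field_simps)
  have pos: "(1 + 1 / real m) ^ m > 0" by (rule zero_less_power) (auto intro: add_pos_nonneg)
  have "(1 - 1 / real n) ^ (n - 1) = 1 / (1 + 1 / real m) ^ m"
    using eq m_def by (simp add: power_one_over)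
  also have "\<dots> \<ge> 1 / exp 1" using e pos by (simp add: frac_le)
  finally show ?thesis by (simp add: exp_minus inverse_eq_divide)
qed

lemma nbr_lemma:
  assumes "distinct ys"
  shows "\<exists>a b. \<forall>u. {v, u} \<in> cycle_edges ys \<longrightarrow> u = a \<or> u = b"
proof (cases "v \<in> set ys")
  case False
  have "{v, u} \<notin> cycle_edges ys" for u
  proof
    assume "{v, u} \<in> cycle_edges ys"
    then obtain i where i: "i < length ys" "{v, u} = {ys ! i, ys ! ((i + 1) mod length ys)}"
      unfolding cycle_edges_def by blast
    then have "v = ys ! i \<or> v = ys ! ((i + 1) mod length ys)" by (auto simp: doubleton_eq_iff)
    moreover have "(i + 1) mod length ys < length ys" proof -
      have "length ys > 0" using i by linarith
      then show ?thesis by simp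
    qed
    ultimately show False using False i by (metis nth_mem)
  qed
  then show ?thesis by blast
next
  case True
  then obtain p where p: "p < length ys" "ys ! p = v" by (meson in_set_conv_nth)
  let ?L = "length ys"
  have "\<forall>u. {v, u} \<in> cycle_edges ys \<longrightarrow> u = ys ! ((p + 1) mod ?L) \<or> u = ys ! ((p + ?L - 1) mod ?L)"
  proof (intro allI impI)
    fix u assume "{v, u} \<in> cycle_edges ys"
    then obtain i where i: "i < ?L" "{v, u} = {ys ! i, ys ! ((i + 1) mod ?L)}"
      unfolding cycle_edges_def by blast
    have im: "(i + 1) mod ?L < ?L" proof -
      have "length ys > 0" using i by linarith
      then show ?thesis by simp
    qed
    from i(2) consider "v = ys ! i" "u = ys ! ((i + 1) mod ?L)" | "v = ys ! ((i + 1) mod ?L)" "u = ys ! i"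
      by (auto simp: doubleton_eq_iff)
    then show "u = ys ! ((p + 1) mod ?L) \<or> u = ys ! ((p + ?L - 1) mod ?L)"
    proof cases
      case 1
      then have "i = p" using p i assms nth_eq_iff_index_eq by metis
      then show ?thesis using 1 by simp
    next
      case 2
      then have ip: "(i + 1) mod ?L = p" using p im assms nth_eq_iff_index_eq by metis
      have "i = (p + ?L - 1) mod ?L"
      proof (cases "i + 1 < ?L")
        case True then have "p = i + 1" using ip by simp
        then show ?thesis using i by simp
      next
        case False then have "i + 1 = ?L" using i by simp
        then have "p = 0" using ip by simp
        then show ?thesis using \<open>i + 1 = ?L\<close> by simp
      qed
      then show ?thesis using 2 by simp
    qed
  qed
  then show ?thesis by blast
qed

lemma mod_suc:
  fixes j L :: nat
  assumes "j < L"
  shows "(j + 1) mod L = (if j + 1 = L then 0 else j + 1)"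
proof (cases "j + 1 = L")
  case False
  then have "j + 1 < L" using assms by linarith
  then show ?thesis using False by simp
qed simp

lemma aux_ij:
  fixes i j L :: nat
  assumes "i < L" "j < L" "L \<ge> 3" "i = (if j + 1 = L then 0 else j + 1)" "j = (if i + 1 = L then 0 else i + 1)"
  shows False
  using assms by presburger

lemma edge_inj:
  assumes "distinct xs" "length xs \<ge> 3"
  shows "inj_on (\<lambda>i. {xs ! i, xs ! ((i + 1) mod length xs)}) {..<length xs}"
proof (rule inj_onI)
  let ?L = "length xs"
  fix i j assume i: "i \<in> {..<?L}" and j: "j \<in> {..<?L}"
    and e: "{xs ! i, xs ! ((i + 1) mod ?L)} = {xs ! j, xs ! ((j + 1) mod ?L)}"
  have L0: "?L > 0" using i by auto
  have im: "(i + 1) mod ?L < ?L" and jm: "(j + 1) mod ?L < ?L" using L0 by auto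
  from e consider "xs ! i = xs ! j" | "xs ! i = xs ! ((j + 1) mod ?L)" "xs ! ((i + 1) mod ?L) = xs ! j"
    by (auto simp: doubleton_eq_iff)
  then show "i = j"
  proof cases
    case 1 then show ?thesis using i j assms nth_eq_iff_index_eq by auto
  next
    case 2
    then have a: "i = (j + 1) mod ?L" and b: "(i + 1) mod ?L = j"
      using i j im jm assms nth_eq_iff_index_eq by (metis lessThan_iff)+
    have c1: "i = (if j + 1 = ?L then 0 else j + 1)" using a mod_suc[of j ?L] j by simp
    have c2: "j = (if i + 1 = ?L then 0 else i + 1)" using b mod_suc[of i ?L] i by simp
    have iL: "i < ?L" and jL: "j < ?L" using i j by auto
    show ?thesis using aux_ij[OF iL jL assms(2) c1 c2] ..
  qed
qed

fun nA :: "nat set set \<Rightarrow> nat list \<Rightarrow> nat" where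
  "nA H (v # w # r) = (if {v, w} \<in> H then 0 else 1) + nA H (w # r)"
| "nA H _ = 0"

lemma nA_card: "nA H xs = card {i. i + 1 < length xs \<and> {xs ! i, xs ! (i + 1)} \<notin> H}"
proof (induction H xs rule: nA.induct)
  case (1 H v w r)
  let ?S = "{i. i + 1 < length (w # r) \<and> {(w # r) ! i, (w # r) ! (i + 1)} \<notin> H}"
  have eq: "{i. i + 1 < length (v # w # r) \<and> {(v # w # r) ! i, (v # w # r) ! (i + 1)} \<notin> H}
     = (if {v, w} \<in> H then {} else {0}) \<union> Suc ` ?S"
  proof (rule set_eqI)
    fix i show "i \<in> {i. i + 1 < length (v # w # r) \<and> {(v # w # r) ! i, (v # w # r) ! (i + 1)} \<notin> H}
      \<longleftrightarrow> i \<in> (if {v, w} \<in> H then {} else {0}) \<union> Suc ` ?S"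
      by (cases i) auto
  qed
  have fin: "finite ?S" by (rule finite_subset[of _ "{..<length (w # r)}"]) auto
  show ?case using 1 unfolding eq
    by (auto simp: card_image fin)
qed auto

lemma count_lemma:
  assumes "distinct xs" "length xs \<ge> 3" "{last xs, hd xs} \<notin> H"
  shows "card (cycle_edges xs - H) = nA H xs + 1"
proof -
  let ?L = "length xs"
  let ?E = "\<lambda>i. {xs ! i, xs ! ((i + 1) mod ?L)}"
  have ne: "xs \<noteq> []" using assms by auto
  have ce: "cycle_edges xs - H = ?E ` {i. i < ?L \<and> ?E i \<notin> H}"
    unfolding cycle_edges_def by blast
  have inj: "inj_on ?E {i. i < ?L \<and> ?E i \<notin> H}"
    using edge_inj[OF assms(1,2)] by (rule inj_on_subset) auto
  have last: "?E (?L - 1) = {last xs, hd xs}" using ne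
    by (simp add: last_conv_nth hd_conv_nth)
  have seteq: "{i. i < ?L \<and> ?E i \<notin> H} = insert (?L - 1) {i. i + 1 < ?L \<and> {xs ! i, xs ! (i + 1)} \<notin> H}"
  proof (rule set_eqI)
    fix i show "i \<in> {i. i < ?L \<and> ?E i \<notin> H} \<longleftrightarrow> i \<in> insert (?L - 1) {i. i + 1 < ?L \<and> {xs ! i, xs ! (i + 1)} \<notin> H}"
      using last assms(3) ne by (cases "i + 1 < ?L") (auto simp: mod_suc)
  qed
  have fin: "finite {i. i + 1 < ?L \<and> {xs ! i, xs ! (i + 1)} \<notin> H}"
    by (rule finite_subset[of _ "{..<?L}"]) auto
  have nin: "?L - 1 \<notin> {i. i + 1 < ?L \<and> {xs ! i, xs ! (i + 1)} \<notin> H}" by auto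
  have "card (cycle_edges xs - H) = card {i. i < ?L \<and> ?E i \<notin> H}"
    unfolding ce by (rule card_image[OF inj])
  also have "\<dots> = nA H xs + 1" unfolding seteq nA_card using fin nin by simp
  finally show ?thesis .
qed



lemma arith_A:
  fixes x m q :: real
  assumes x: "x \<ge> 4" and m: "0 \<le> m" "m \<le> 2" and q: "0 \<le> q" "m + q \<le> x - 1"
  shows "m * (1 - 1 / x) + q * (1 / (x * (x - 2))) \<le> 2"
proof -
  have pos: "x * (x - 2) > 0" using x by simp
  have eq: "m * (1 - 1 / x) + q * (1 / (x * (x - 2))) = (m * ((x - 1) * (x - 2)) + q) / (x * (x - 2))"
    using x by (simp add: field_simps)
  have "3 * 2 \<le> (x - 1) * (x - 2)" by (rule mult_mono) (use x in auto)
  then have c: "(x - 1) * (x - 2) - 1 \<ge> 0" by linarith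
  have "m * ((x - 1) * (x - 2)) + q \<le> m * ((x - 1) * (x - 2) - 1) + (x - 1)" using q by (simp add: algebra_simps)
  also have "\<dots> \<le> 2 * ((x - 1) * (x - 2) - 1) + (x - 1)" using mult_right_mono[OF m(2) c] by simp
  also have "\<dots> \<le> 2 * (x * (x - 2))" using x by (simp add: algebra_simps)
  finally show ?thesis unfolding eq using pos by (simp add: divide_le_eq)
qed

lemma arith_B:
  fixes x m q :: real
  assumes x: "x \<ge> 4" and m: "0 \<le> m" "m \<le> 1" and q: "0 \<le> q" "m + q \<le> x - 1"
  shows "m * (1 - 1 / x) + q * (1 / (x * (x - 2))) \<le> 1"
proof -
  have pos: "x * (x - 2) > 0" using x by simp
  have eq: "m * (1 - 1 / x) + q * (1 / (x * (x - 2))) = (m * ((x - 1) * (x - 2)) + q) / (x * (x - 2))"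
    using x by (simp add: field_simps)
  have "3 * 2 \<le> (x - 1) * (x - 2)" by (rule mult_mono) (use x in auto)
  then have c: "(x - 1) * (x - 2) - 1 \<ge> 0" by linarith
  have "m * ((x - 1) * (x - 2)) + q \<le> m * ((x - 1) * (x - 2) - 1) + (x - 1)" using q by (simp add: algebra_simps)
  also have "\<dots> \<le> 1 * ((x - 1) * (x - 2) - 1) + (x - 1)" using mult_right_mono[OF m(2) c] by simp
  also have "\<dots> \<le> 1 * (x * (x - 2))" using x by (simp add: algebra_simps)
  finally show ?thesis unfolding eq using pos by (simp add: divide_le_eq)
qed

lemma D_bound:
  fixes n :: nat
  assumes n: "n \<ge> 4" and nb: "\<forall>u. {v, u} \<in> H \<longrightarrow> u = a \<or> u = b"
    and fin: "finite U" and cU: "card U \<le> n - 1" and vU: "v \<notin> U"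
  shows "(\<Sum>j\<in>U. Pi_H n H v j) \<le> 2"
    and "(\<exists>u. {v, u} \<in> H \<and> u \<notin> U) \<Longrightarrow> (\<Sum>j\<in>U. Pi_H n H v j) \<le> 1"
proof -
  define N where "N = {j \<in> U. {v, j} \<in> H}"
  define Q where "Q = U - N"
  have NU: "N \<subseteq> U" unfolding N_def by auto
  have finN: "finite N" using fin NU finite_subset by blast
  have sum_eq: "(\<Sum>j\<in>U. Pi_H n H v j) = real (card N) * (1 - 1 / real n) + real (card Q) * (1 / (real n * (real n - 2)))"
  proof -
    have "(\<Sum>j\<in>U. Pi_H n H v j) = (\<Sum>j\<in>U - N. Pi_H n H v j) + (\<Sum>j\<in>N. Pi_H n H v j)"
      using sum.subset_diff[OF NU fin] by simp
    also have "(\<Sum>j\<in>N. Pi_H n H v j) = (\<Sum>j\<in>N. 1 - 1 / real n)"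
      by (rule sum.cong) (use vU NU in \<open>auto simp: Pi_H_def N_def\<close>)
    also have "(\<Sum>j\<in>U - N. Pi_H n H v j) = (\<Sum>j\<in>U - N. 1 / (real n * (real n - 2)))"
      by (rule sum.cong) (use vU in \<open>auto simp: Pi_H_def N_def\<close>)
    finally show ?thesis unfolding Q_def by simp
  qed
  have cardNQ: "card N + card Q = card U" unfolding Q_def
    using card_Diff_subset[OF finN NU] card_mono[OF fin NU] by simp
  have Nab: "N \<subseteq> {a, b}" unfolding N_def using nb by auto
  have "card {a, b} \<le> 2" by (cases "a = b") simp_all
  then have cN2: "card N \<le> 2" using card_mono[OF _ Nab] by simp
  have x4: "real n \<ge> 4" using n by simp
  have mq: "real (card N) + real (card Q) \<le> real n - 1" using cardNQ cU n by linarith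
  show "(\<Sum>j\<in>U. Pi_H n H v j) \<le> 2"
    unfolding sum_eq by (rule arith_A[OF x4]) (use cN2 mq in auto)
  assume "\<exists>u. {v, u} \<in> H \<and> u \<notin> U"
  then obtain u where u: "{v, u} \<in> H" "u \<notin> U" by blast
  have "u = a \<or> u = b" using nb u by blast
  then have "N \<subseteq> {if u = a then b else a}" using Nab u NU by auto
  then have "card N \<le> 1" using card_mono[of "{if u = a then b else a}" N] by simp
  then show "(\<Sum>j\<in>U. Pi_H n H v j) \<le> 1"
    unfolding sum_eq by (intro arith_B[OF x4]) (use mq in auto)
qed

lemma ratio_bound:
  fixes n :: nat
  assumes n: "n \<ge> 4" and nb: "\<forall>u. {v, u} \<in> H \<longrightarrow> u = a \<or> u = b"
    and vV: "v \<in> vertices n" and UV: "U \<subseteq> vertices n - {v}" and wU: "w \<in> U"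
  shows "{v, w} \<in> H \<Longrightarrow> Pi_H n H v w / (\<Sum>j\<in>U. Pi_H n H v j)
            \<ge> (1 - 1 / real n) * (if (\<exists>u. {v, u} \<in> H \<and> u \<notin> U) then 1 else 1 / 2)"
    and "{v, w} \<notin> H \<Longrightarrow> Pi_H n H v w / (\<Sum>j\<in>U. Pi_H n H v j) \<ge> 1 / (2 * (real n * (real n - 2)))"
proof -
  have finV: "finite (vertices n - {v})" unfolding vertices_def by simp
  have fin: "finite U" using finite_subset[OF UV finV] .
  have "card U \<le> card (vertices n - {v})" using card_mono[OF finV UV] .
  also have "\<dots> = n - 1" using vV unfolding vertices_def by simp
  finally have cU: "card U \<le> n - 1" .
  have vU: "v \<notin> U" using UV by auto
  have vw: "v \<noteq> w" using vU wU by auto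
  have x4: "real n \<ge> 4" using n by simp
  have nonneg: "Pi_H n H v j \<ge> 0" for j using x4 unfolding Pi_H_def by auto
  let ?D = "\<Sum>j\<in>U. Pi_H n H v j"
  have Dge: "?D \<ge> Pi_H n H v w" using member_le_sum[OF wU, of "Pi_H n H v"] nonneg fin by simp
  have D2: "?D \<le> 2" using D_bound(1)[OF n nb fin cU vU] .
  {
    assume e: "{v, w} \<in> H"
    have P: "Pi_H n H v w = 1 - 1 / real n" using e vw unfolding Pi_H_def by simp
    have Ppos: "1 - 1 / real n > 0" using x4 by simp
    have Dpos: "?D > 0" using Dge P Ppos by linarith
    show "Pi_H n H v w / ?D \<ge> (1 - 1 / real n) * (if (\<exists>u. {v, u} \<in> H \<and> u \<notin> U) then 1 else 1 / 2)"
    proof (cases "\<exists>u. {v, u} \<in> H \<and> u \<notin> U")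
      case True
      have D1: "?D \<le> 1" using D_bound(2)[OF n nb fin cU vU True] .
      have "(1 - 1 / real n) / 1 \<le> (1 - 1 / real n) / ?D"
        by (rule divide_left_mono) (use D1 Dpos Ppos in auto)
      moreover have eq: "(if (\<exists>u. {v, u} \<in> H \<and> u \<notin> U) then 1 else 1 / 2) = (1::real)" using True by simp
      ultimately show ?thesis unfolding eq P by simp
    next
      case False
      have "(1 - 1 / real n) / 2 \<le> (1 - 1 / real n) / ?D"
        by (rule divide_left_mono) (use D2 Dpos Ppos in auto)
      moreover have eq: "(if (\<exists>u. {v, u} \<in> H \<and> u \<notin> U) then 1 else 1 / 2) = (1/2::real)" using False by simp
      moreover have "(1 - 1 / real n) * (1/2) = (1 - 1 / real n) / 2" by simp
      ultimately show ?thesis unfolding eq P by linarith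
    qed
  }
  {
    assume e: "{v, w} \<notin> H"
    have P: "Pi_H n H v w = 1 / (real n * (real n - 2))" using e vw unfolding Pi_H_def by simp
    have Ppos: "1 / (real n * (real n - 2)) > 0" using x4 by simp
    have Dpos: "?D > 0" using Dge P Ppos by linarith
    have "(1 / (real n * (real n - 2))) / 2 \<le> (1 / (real n * (real n - 2))) / ?D"
      by (rule divide_left_mono) (use D2 Dpos Ppos in auto)
    then show "Pi_H n H v w / ?D \<ge> 1 / (2 * (real n * (real n - 2)))" using P by (simp add: ac_simps)
  }
qed

lemma main_ind:
  fixes n :: nat
  assumes n: "n \<ge> 4" and nb: "\<forall>v. \<exists>a b. \<forall>u. {v, u} \<in> H \<longrightarrow> u = a \<or> u = b"
  shows "distinct (v # rest) \<Longrightarrow> set (v # rest) \<subseteq> vertices n \<Longrightarrow>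
    path_prob (Pi_H n H) (set rest) (v # rest) \<ge>
      (1 - 1 / real n) ^ length rest * (if (\<exists>u. {v, u} \<in> H \<and> u \<notin> set rest) then 1 else 1 / 2)
      * (1 / (4 * real n ^ 2)) ^ nA H (v # rest)"
proof (induction rest arbitrary: v)
  case Nil
  then show ?case by simp
next
  case (Cons w r)
  have x4: "real n \<ge> 4" using n by simp
  let ?f = "1 / (4 * real n ^ 2)"
  let ?g = "1 - 1 / real n"
  have g0: "?g \<ge> 0" "?g \<le> 1" using x4 by auto
  have f0: "?f \<ge> 0" by simp
  obtain a b where ab: "\<forall>u. {v, u} \<in> H \<longrightarrow> u = a \<or> u = b" using nb by blast
  have vV: "v \<in> vertices n" using Cons.prems by simp
  have UV: "set (w # r) \<subseteq> vertices n - {v}" using Cons.prems by auto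
  have wU: "w \<in> set (w # r)" by simp
  have setr: "set (w # r) - {w} = set r" using Cons.prems by auto
  have IH: "path_prob (Pi_H n H) (set r) (w # r) \<ge>
      ?g ^ length r * (if (\<exists>u. {w, u} \<in> H \<and> u \<notin> set r) then 1 else 1 / 2) * ?f ^ nA H (w # r)"
    using Cons.IH[of w] Cons.prems by auto
  let ?r = "Pi_H n H v w / (\<Sum>j\<in>set (w # r). Pi_H n H v j)"
  have pp: "path_prob (Pi_H n H) (set (w # r)) (v # w # r) = ?r * path_prob (Pi_H n H) (set r) (w # r)"
    using setr by simp
  let ?G = "(if (\<exists>u. {v, u} \<in> H \<and> u \<notin> set (w # r)) then 1 else 1 / (2::real))"
  have G: "?G \<ge> 1 / 2" "?G \<le> 1" by auto
  show ?case
  proof (cases "{v, w} \<in> H")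
    case True
    have r1: "?r \<ge> ?g * ?G" using ratio_bound(1)[OF n ab vV UV wU True] .
    have "?g * ?G \<ge> 0" using g0 G by simp
    then have r0: "?r \<ge> 0" using r1 by linarith
    have good: "\<exists>u. {w, u} \<in> H \<and> u \<notin> set r" using True Cons.prems
      by (intro exI[of _ v]) (auto simp: insert_commute)
    have IH': "path_prob (Pi_H n H) (set r) (w # r) \<ge> ?g ^ length r * ?f ^ nA H (w # r)"
      using IH good by simp
    have "?g * ?G * (?g ^ length r * ?f ^ nA H (w # r)) \<le> ?r * path_prob (Pi_H n H) (set r) (w # r)"
      by (rule mult_mono[OF r1 IH']) (use g0 G f0 r0 in auto)
    moreover have "?g ^ length (w # r) * ?G * ?f ^ nA H (v # w # r) = ?g * ?G * (?g ^ length r * ?f ^ nA H (w # r))"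
      using True by (simp add: ac_simps)
    ultimately show ?thesis unfolding pp by linarith
  next
    case False
    have r1: "?r \<ge> 1 / (2 * (real n * (real n - 2)))" using ratio_bound(2)[OF n ab vV UV wU False] .
    have "1 / (2 * (real n * (real n - 2))) \<ge> 0" using x4 by simp
    then have r0: "?r \<ge> 0" using r1 by linarith
    have IH': "path_prob (Pi_H n H) (set r) (w # r) \<ge> ?g ^ length r * (1/2) * ?f ^ nA H (w # r)"
    proof -
      have "(1/2) \<le> (if (\<exists>u. {w, u} \<in> H \<and> u \<notin> set r) then 1 else 1 / (2::real))" by simp
      then have "?g ^ length r * (1/2) * ?f ^ nA H (w # r) \<le> ?g ^ length r * (if (\<exists>u. {w, u} \<in> H \<and> u \<notin> set r) then 1 else 1 / 2) * ?f ^ nA H (w # r)"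
        by (intro mult_right_mono mult_left_mono) (use g0 f0 in auto)
      then show ?thesis using IH by linarith
    qed
    have "1 / (2 * (real n * (real n - 2))) * (?g ^ length r * (1/2) * ?f ^ nA H (w # r))
        \<le> ?r * path_prob (Pi_H n H) (set r) (w # r)"
      by (rule mult_mono[OF r1 IH']) (use g0 G f0 x4 r0 in auto)
    moreover have "?g ^ length (w # r) * ?G * ?f ^ nA H (v # w # r)
        \<le> 1 / (2 * (real n * (real n - 2))) * (?g ^ length r * (1/2) * ?f ^ nA H (w # r))"
    proof -
      have "?g * ?G \<le> 1" using g0 G by (intro mult_le_one) auto
      then have "?g * ?G * ?f \<le> 1 * ?f" using f0 by (intro mult_right_mono) auto
      also have "1 * ?f \<le> 1 / (2 * (real n * (real n - 2))) * (1/2)"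
      proof -
        have a1: "1 / (2 * (real n * (real n - 2))) * (1/2) = 1 / (4 * (real n * (real n - 2)))" by simp
        have a2: "4 * (real n * (real n - 2)) \<le> 4 * real n ^ 2" using x4 by (simp add: power2_eq_square algebra_simps)
        have a3: "4 * (real n * (real n - 2)) > 0" using x4 by simp
        show ?thesis unfolding a1 using a2 a3 by (simp add: frac_le)
      qed
      finally have k: "?g * ?G * ?f \<le> 1 / (2 * (real n * (real n - 2))) * (1/2)" .
      have "?g ^ length (w # r) * ?G * ?f ^ nA H (v # w # r) = (?g * ?G * ?f) * (?g ^ length r * ?f ^ nA H (w # r))"
        using False by (simp add: ac_simps)
      also have "\<dots> \<le> (1 / (2 * (real n * (real n - 2))) * (1/2)) * (?g ^ length r * ?f ^ nA H (w # r))"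
        by (rule mult_right_mono[OF k]) (use g0 f0 in auto)
      also have "\<dots> = 1 / (2 * (real n * (real n - 2))) * (?g ^ length r * (1/2) * ?f ^ nA H (w # r))"
        by (simp only: ac_simps)
      finally show ?thesis .
    qed
    ultimately show ?thesis unfolding pp by linarith
  qed
qed



fun pe :: "nat list \<Rightarrow> nat set set" where
  "pe (v # w # r) = insert {v, w} (pe (w # r))"
| "pe _ = {}"

lemma pe_idx: "pe xs = {{xs ! i, xs ! (i+1)} | i. i + 1 < length xs}"
proof (induction xs rule: pe.induct)
  case (1 v w r)
  show ?case
  proof (rule set_eqI, rule iffI)
    fix e assume "e \<in> pe (v # w # r)"
    then consider "e = {v, w}" | "e \<in> pe (w # r)" by auto
    then show "e \<in> {{(v # w # r) ! i, (v # w # r) ! (i+1)} | i. i + 1 < length (v # w # r)}"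
    proof cases
      case 1
      then have "e = {(v # w # r) ! 0, (v # w # r) ! (0+1)} \<and> 0 + 1 < length (v # w # r)" by simp
      then show ?thesis by blast
    next
      case 2
      then obtain i where i: "i + 1 < length (w # r)" "e = {(w # r) ! i, (w # r) ! (i+1)}"
        using "1.IH" by blast
      then have "e = {(v # w # r) ! Suc i, (v # w # r) ! (Suc i+1)} \<and> Suc i + 1 < length (v # w # r)" by simp
      then show ?thesis by blast
    qed
  next
    fix e assume "e \<in> {{(v # w # r) ! i, (v # w # r) ! (i+1)} | i. i + 1 < length (v # w # r)}"
    then obtain i where i: "i + 1 < length (v#w#r)" "e = {(v # w # r) ! i, (v # w # r) ! (i+1)}" by blast
    show "e \<in> pe (v # w # r)"
    proof (cases i)
      case 0 then show ?thesis using i by simp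
    next
      case (Suc j) then show ?thesis using i 1 by auto
    qed
  qed
qed auto

lemma cycle_edges_pe:
  assumes "xs \<noteq> []"
  shows "cycle_edges xs = insert {last xs, hd xs} (pe xs)"
proof -
  let ?L = "length xs"
  have L: "?L > 0" using assms by simp
  show ?thesis
  proof (rule set_eqI, rule iffI)
    fix e assume "e \<in> cycle_edges xs"
    then obtain i where i: "i < ?L" "e = {xs ! i, xs ! ((i + 1) mod ?L)}" unfolding cycle_edges_def by blast
    show "e \<in> insert {last xs, hd xs} (pe xs)"
    proof (cases "i + 1 < ?L")
      case True then show ?thesis using i unfolding pe_idx by auto
    next
      case False then have "i = ?L - 1" using i by simp
      then show ?thesis using i assms by (simp add: last_conv_nth hd_conv_nth)
    qed
  next
    fix e assume "e \<in> insert {last xs, hd xs} (pe xs)"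
    then show "e \<in> cycle_edges xs"
    proof
      assume "e = {last xs, hd xs}"
      then have "e = {xs ! (?L - 1), xs ! (((?L - 1) + 1) mod ?L)}" using assms L
        by (simp add: last_conv_nth hd_conv_nth)
      then show ?thesis unfolding cycle_edges_def using L by force
    next
      assume "e \<in> pe xs"
      then obtain i where "i + 1 < ?L" "e = {xs ! i, xs ! (i+1)}" unfolding pe_idx by blast
      then show ?thesis unfolding cycle_edges_def by force
    qed
  qed
qed

lemma pe_snoc: "xs \<noteq> [] \<Longrightarrow> pe (xs @ [x]) = insert {last xs, x} (pe xs)"
  by (induction xs rule: pe.induct) auto

lemma pe_Cons: "xs \<noteq> [] \<Longrightarrow> pe (x # xs) = insert {x, hd xs} (pe xs)"
  by (cases xs) auto

lemma cycle_edges_rotate1: "cycle_edges (rotate1 xs) = cycle_edges xs"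
proof (cases xs)
  case Nil then show ?thesis by simp
next
  case (Cons x ys)
  show ?thesis
  proof (cases "ys = []")
    case True then show ?thesis using Cons by simp
  next
    case False
    then show ?thesis using Cons
      by (simp add: cycle_edges_pe pe_snoc pe_Cons insert_commute)
  qed
qed

lemma cycle_edges_rotate: "cycle_edges (rotate m xs) = cycle_edges xs"
  by (induction m) (auto simp: cycle_edges_rotate1)


lemma alg_id:
  fixes x K N G :: real
  assumes "x > 0" "K > 0" "N > 0"
  shows "G * (1 / (2 * x * K * N)) = 1 / x * (G * (1 / 2) * (1 / (K * N)))"
  using assms by (simp add: field_simps)

lemma tour_len: "is_tour n xs \<Longrightarrow> length xs = n"
proof -
  assume "is_tour n xs"
  then have "distinct xs" "set xs = {1..n}" unfolding is_tour_def vertices_def by auto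
  then show ?thesis using distinct_card[of xs] by simp
qed

theorem claim1:
  fixes k :: nat
  assumes "k \<ge> 2"
  shows "\<exists>c > 0. \<forall>n H H'. 4 \<le> n \<longrightarrow> k \<le> n \<longrightarrow> ham_cycle n H \<longrightarrow> k_exchange n k H H' \<longrightarrow>
           gen_prob n (Pi_H n H) H' \<ge> c / real n ^ (2 * k - 1)"
proof -
  define c :: real where "c = 1 / (2 * exp 1 * 4 ^ (k - 1))"
  have cpos: "c > 0" unfolding c_def by simp
  show ?thesis
  proof (intro exI[of _ c] conjI allI impI cpos)
    fix n H H'
    assume n4: "4 \<le> n" and kn: "k \<le> n" and hc: "ham_cycle n H" and kx: "k_exchange n k H H'"
    obtain ys where ys: "is_tour n ys" "H = cycle_edges ys" using hc unfolding ham_cycle_def by blast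
    obtain zs where zs: "is_tour n zs" "H' = cycle_edges zs" using kx unfolding k_exchange_def ham_cycle_def by blast
    obtain R A where RA: "R \<subseteq> H" "card R = k" "A \<inter> H = {}" "card A = k" "H' = (H - R) \<union> A"
      using kx unfolding k_exchange_def by blast
    have diffA: "H' - H = A" using RA by auto
    have cardD: "card (cycle_edges zs - H) = k" using diffA zs RA by simp
    have lenz: "length zs = n" using tour_len[OF zs(1)] .
    have "cycle_edges zs - H \<noteq> {}"
    proof
      assume "cycle_edges zs - H = {}"
      then have "card (cycle_edges zs - H) = 0" by (simp only: card.empty)
      then show False using cardD assms by simp
    qed
    then obtain e where e: "e \<in> cycle_edges zs" "e \<notin> H" by blast
    then obtain i where i: "i < n" "e = {zs ! i, zs ! ((i + 1) mod n)}"
      unfolding cycle_edges_def lenz by blast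
    define xs where "xs = rotate (Suc i) zs"
    have tx: "is_tour n xs" using zs(1) unfolding xs_def is_tour_def by simp
    have cex: "cycle_edges xs = H'" unfolding xs_def zs(2) by (rule cycle_edges_rotate)
    have lenx: "length xs = n" unfolding xs_def using lenz by simp
    have ne: "xs \<noteq> []" using lenx n4 by auto
    have r0: "rotate (Suc i) zs ! 0 = zs ! ((Suc i + 0) mod length zs)"
      by (rule nth_rotate) (use lenz n4 in simp)
    have hdx: "hd xs = zs ! ((i + 1) mod n)"
      using ne r0 lenz unfolding xs_def hd_conv_nth[OF ne[unfolded xs_def]] by simp
    have "last xs = xs ! (n - 1)" using ne lenx by (simp add: last_conv_nth)
    also have "\<dots> = zs ! ((Suc i + (n - 1)) mod length zs)" unfolding xs_def
      by (rule nth_rotate) (use lenz n4 in simp)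
    also have "\<dots> = zs ! ((Suc i + (n - 1)) mod n)" using lenz by simp
    also have "(Suc i + (n - 1)) mod n = i"
    proof -
      have "Suc i + (n - 1) = i + n" using n4 by simp
      then show ?thesis using i by simp
    qed
    finally have lastx: "last xs = zs ! i" .
    have closing: "{last xs, hd xs} \<notin> H" using e i hdx lastx by simp
    have dx: "distinct xs" using tx unfolding is_tour_def by simp
    have cnt: "card (cycle_edges xs - H) = nA H xs + 1" using count_lemma[OF dx _ closing] lenx n4 by simp
    then have nAk: "nA H xs = k - 1" using cex zs cardD by simp
    have nb: "\<forall>v. \<exists>a b. \<forall>u. {v, u} \<in> H \<longrightarrow> u = a \<or> u = b"
      using nbr_lemma ys unfolding is_tour_def by blast
    obtain v rest where vr: "xs = v # rest" using ne by (cases xs) auto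
    have setx: "set xs = vertices n" using tx unfolding is_tour_def by simp
    have lr: "length rest = n - 1" using lenx vr by simp
    have setr: "vertices n - {v} = set rest" using setx dx vr by auto
    let ?g = "1 - 1 / real n"
    let ?f = "1 / (4 * real n ^ 2)"
    have x4: "real n \<ge> 4" using n4 by simp
    have d1: "distinct (v # rest)" using dx vr by simp
    have s1: "set (v # rest) \<subseteq> vertices n" using setx vr by simp
    have mi: "path_prob (Pi_H n H) (set rest) (v # rest) \<ge>
      ?g ^ length rest * (if (\<exists>u. {v, u} \<in> H \<and> u \<notin> set rest) then 1 else 1 / 2) * ?f ^ nA H (v # rest)"
      by (rule main_ind[OF n4 nb d1 s1])
    have nAk': "nA H (v # rest) = k - 1" using nAk vr by simp
    have "(1 / 2) \<le> (if (\<exists>u. {v, u} \<in> H \<and> u \<notin> set rest) then 1 else 1 / (2::real))" by simp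
    then have "?g ^ (n - 1) * (1 / 2) * ?f ^ (k - 1) \<le>
      ?g ^ (n - 1) * (if (\<exists>u. {v, u} \<in> H \<and> u \<notin> set rest) then 1 else 1 / 2) * ?f ^ (k - 1)"
      using x4 by (intro mult_right_mono mult_left_mono) auto
    then have "?g ^ (n - 1) * (1 / 2) * ?f ^ (k - 1) \<le>
      ?g ^ length rest * (if (\<exists>u. {v, u} \<in> H \<and> u \<notin> set rest) then 1 else 1 / 2) * ?f ^ nA H (v # rest)"
      unfolding lr nAk' .
    then have pp: "path_prob (Pi_H n H) (set rest) (v # rest) \<ge> ?g ^ (n - 1) * (1 / 2) * ?f ^ (k - 1)"
      using mi by linarith
    have sp: "seq_prob n (Pi_H n H) xs = 1 / real n * path_prob (Pi_H n H) (set rest) (v # rest)"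
      unfolding seq_prob_def using vr setr by simp
    have nonneg: "\<And>i j. Pi_H n H i j \<ge> 0" using x4 unfolding Pi_H_def by auto
    define S where "S = {xs. is_tour n xs \<and> cycle_edges xs = H'}"
    have finS: "finite S"
    proof (rule finite_subset)
      show "S \<subseteq> {xs. set xs \<subseteq> vertices n \<and> length xs = n}"
        unfolding S_def using tour_len unfolding is_tour_def by auto
      show "finite {xs. set xs \<subseteq> vertices n \<and> length xs = n}"
        by (rule finite_lists_length_eq) (simp add: vertices_def)
    qed
    have xS: "xs \<in> S" unfolding S_def using tx cex by simp
    have gp: "gen_prob n (Pi_H n H) H' \<ge> seq_prob n (Pi_H n H) xs"
      unfolding gen_prob_def S_def[symmetric]
      by (rule member_le_sum[OF xS _ finS])
         (simp add: seq_prob_def path_prob_nonneg[OF nonneg])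
    define K :: real where "K = 4 ^ (k - 1)"
    define N :: real where "N = real n ^ (2 * k - 2)"
    have Kpos: "K > 0" and Npos: "N > 0" unfolding K_def N_def using x4 by auto
    have F: "?f ^ (k - 1) = 1 / (K * N)"
    proof -
      have "?f ^ (k - 1) = 1 / (4 ^ (k - 1) * (real n ^ 2) ^ (k - 1))"
        by (simp add: power_mult_distrib power_divide)
      also have "(real n ^ 2) ^ (k - 1) = real n ^ (2 * k - 2)"
        by (simp add: power_mult[symmetric] diff_mult_distrib2)
      finally show ?thesis unfolding K_def N_def .
    qed
    have nN: "real n ^ (2 * k - 1) = real n * N"
    proof -
      have "2 * k - 1 = Suc (2 * k - 2)" using assms by simp
      then show ?thesis unfolding N_def by simp
    qed
    have eb: "?g ^ (n - 1) \<ge> exp (-1)" using exp_bound n4 by simp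
    have "c / real n ^ (2 * k - 1) = exp (-1) * (1 / (2 * real n * K * N))"
      unfolding c_def nN K_def by (simp add: exp_minus field_simps)
    also have "\<dots> \<le> ?g ^ (n - 1) * (1 / (2 * real n * K * N))"
      by (rule mult_right_mono[OF eb]) (use Kpos Npos x4 in simp)
    also have "\<dots> = 1 / real n * (?g ^ (n - 1) * (1 / 2) * ?f ^ (k - 1))"
      unfolding F using x4 Kpos Npos alg_id[of "real n" K N "?g ^ (n - 1)"] by simp
    also have "\<dots> \<le> 1 / real n * path_prob (Pi_H n H) (set rest) (v # rest)"
      by (rule mult_left_mono[OF pp]) simp
    also have "\<dots> \<le> gen_prob n (Pi_H n H) H'" using gp sp by simp
    finally show "gen_prob n (Pi_H n H) H' \<ge> c / real n ^ (2 * k - 1)" .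
  qed
qed

end
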